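(* Consider the relation (B) between $\bar f,g,\bar g$. It defines a birational transformation $\bar g=\bar g(\bar f,g)$ (with inverse $g=g(\bar f,\bar g)$). This transformation [resp. its inverse] is uniquely characterized by the following properties: (i) $\bar g$ [resp. $g$] is given by a ratio of two polynomials in $(\bar f,g)$ [resp. $(\bar f,\bar g)$] of bidegree $(4,1)$, both vanishing at the 8 points $(\bar f,g)=(\bar f(u_i),g(u_i))$ [resp. $(\bar f,\bar g)=(\bar f(u_i),\bar g(u_i))$], $i=1,\dots,8$; (ii) for generic $u$, it maps $(\bar f,g)=(\bar f(\frac{h_1}{qu}),g(\frac{h_1}{qu}))$ to $(\bar f,\bar g)=(\bar f(u),\bar g(u))$ and vice versa.
   Context: Let $h_1,h_2,u_1,\dots,u_8$ be generic nonzero complex parameters and $q=h_1^2h_2^2/(u_1\cdots u_8)$. Put $g(u)=u+h_2/u$, $\bar f(u)=u+\frac{h_1}{qu}$, $\bar g(u)=u+\frac{h_2q}{u}$. Let $U(z)=\prod_{i=1}^8(z-u_i)=\sum_{i=0}^8(-1)^i m_{8-i}z^i$ (so $m_0=1$, $m_8=h_1^2h_2^2/q$). For a parameter $h$ define polynomials in a variable $x$: $P_n(h,x)=m_0x^4-m_1x^3+(m_2-3hm_0-h^{-3}m_8)x^2+(2hm_1-m_3+h^{-2}m_7)x+(h^2m_0-hm_2+m_4-h^{-1}m_6+h^{-2}m_8)$, $P_d(h,x)=m_8x^4-hm_7x^3+(h^2m_6-3hm_8-h^5m_0)x^2+(2h^2m_7-h^3m_5+h^5m_1)x+(h^6m_0-h^5m_2+h^4m_4-h^3m_6+h^2m_8)$.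 Relation (B): $$\frac{(\bar f-\bar g)(\bar f-g)-(\frac{h_1}{q}-h_2q)(\frac{h_1}{q}-h_2)\frac q{h_1}}{(\frac{\bar fq}{h_1}-\frac{\bar g}{h_2q})(\frac{\bar fq}{h_1}-\frac g{h_2})-(\frac q{h_1}-\frac1{h_2q})(\frac q{h_1}-\frac1{h_2})\frac{h_1}q}=\frac{h_1^4h_2^2}{q^3}\frac{P_n(\frac{h_1}q,\bar f)}{P_d(\frac{h_1}q,\bar f)}.$$ *)

theory Defs
  imports Complex_Main
begin

definition nonzero_mpoly :: "nat \<Rightarrow> ((nat \<Rightarrow> nat) \<Rightarrow> complex) \<Rightarrow> bool" where
  "nonzero_mpoly n c \<longleftrightarrow> finite {e. c e \<noteq> 0} \<and> {e. c e \<noteq> 0} \<noteq> {} \<and>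
     (\<forall>e. c e \<noteq> 0 \<longrightarrow> (\<forall>i\<ge>n. e i = 0))"

definition mpoly_val :: "((nat \<Rightarrow> nat) \<Rightarrow> complex) \<Rightarrow> (nat \<Rightarrow> complex) \<Rightarrow> complex" where
  "mpoly_val c x = (\<Sum>e\<in>{e. c e \<noteq> 0}. c e * (\<Prod>i\<in>{i. e i \<noteq> 0}. x i ^ e i))"

definition param_vec :: "complex \<Rightarrow> complex \<Rightarrow> (nat \<Rightarrow> complex) \<Rightarrow> nat \<Rightarrow> complex" where
  "param_vec h1 h2 u = (\<lambda>i. if i = 0 then h1 else if i = 1 then h2 else u (i - 1))"

definition pt2 :: "complex \<Rightarrow> complex \<Rightarrow> nat \<Rightarrow> complex" where
  "pt2 x y = (\<lambda>i. if i = 0 then x else y)"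

definition qpar :: "complex \<Rightarrow> complex \<Rightarrow> (nat \<Rightarrow> complex) \<Rightarrow> complex" where
  "qpar h1 h2 u = h1^2 * h2^2 / (\<Prod>i\<in>{1..8::nat}. u i)"

definition gfun :: "complex \<Rightarrow> complex \<Rightarrow> complex" where
  "gfun h2 w = w + h2 / w"

definition fbar :: "complex \<Rightarrow> complex \<Rightarrow> complex \<Rightarrow> complex" where
  "fbar h1 q w = w + h1 / (q * w)"

definition gbar :: "complex \<Rightarrow> complex \<Rightarrow> complex \<Rightarrow> complex" where
  "gbar h2 q w = w + h2 * q / w"

text \<open>Elementary symmetric functions m_k of u_1..u_8, so that
  prod (z - u_i) = sum_i (-1)^i m_{8-i} z^i.\<close>
definition msym :: "(nat \<Rightarrow> complex) \<Rightarrow> nat \<Rightarrow> complex" where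
  "msym u k = (\<Sum>S\<in>{S. S \<subseteq> {1..8::nat} \<and> card S = k}. \<Prod>i\<in>S. u i)"

definition Pn :: "(nat \<Rightarrow> complex) \<Rightarrow> complex \<Rightarrow> complex \<Rightarrow> complex" where
  "Pn u h x = (let m = msym u in
     m 0 * x^4 - m 1 * x^3 + (m 2 - 3*h*m 0 - m 8 / h^3) * x^2
     + (2*h*m 1 - m 3 + m 7 / h^2) * x
     + (h^2 * m 0 - h * m 2 + m 4 - m 6 / h + m 8 / h^2))"

definition Pd :: "(nat \<Rightarrow> complex) \<Rightarrow> complex \<Rightarrow> complex \<Rightarrow> complex" where
  "Pd u h x = (let m = msym u in
     m 8 * x^4 - h * m 7 * x^3 + (h^2 * m 6 - 3*h*m 8 - h^5 * m 0) * x^2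
     + (2*h^2 * m 7 - h^3 * m 5 + h^5 * m 1) * x
     + (h^6 * m 0 - h^5 * m 2 + h^4 * m 4 - h^3 * m 6 + h^2 * m 8))"

definition relB :: "complex \<Rightarrow> complex \<Rightarrow> (nat \<Rightarrow> complex) \<Rightarrow> complex \<Rightarrow> complex \<Rightarrow> complex \<Rightarrow> bool" where
  "relB h1 h2 u fb g gb \<longleftrightarrow> (let q = qpar h1 h2 u in
     ((fb - gb) * (fb - g) - (h1/q - h2*q) * (h1/q - h2) * (q/h1)) /
     ((fb*q/h1 - gb/(h2*q)) * (fb*q/h1 - g/h2) - (q/h1 - 1/(h2*q)) * (q/h1 - 1/h2) * (h1/q))
     = h1^4 * h2^2 / q^3 * (Pn u (h1/q) fb / Pd u (h1/q) fb))"

definition bd41 :: "(nat \<Rightarrow> nat \<Rightarrow> complex) \<Rightarrow> complex \<Rightarrow> complex \<Rightarrow> complex" where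
  "bd41 a x y = (\<Sum>i\<le>4. \<Sum>j\<le>1. a i j * x^i * y^j)"

definition fwd_props :: "complex \<Rightarrow> complex \<Rightarrow> (nat \<Rightarrow> complex) \<Rightarrow>
    (nat \<Rightarrow> nat \<Rightarrow> complex) \<Rightarrow> (nat \<Rightarrow> nat \<Rightarrow> complex) \<Rightarrow> bool" where
  "fwd_props h1 h2 u N D \<longleftrightarrow> (let q = qpar h1 h2 u in
     (\<forall>i\<in>{1..8}. bd41 N (fbar h1 q (u i)) (gfun h2 (u i)) = 0 \<and>
                 bd41 D (fbar h1 q (u i)) (gfun h2 (u i)) = 0) \<and>
     finite {t. \<not> (bd41 D (fbar h1 q (h1/(q*t))) (gfun h2 (h1/(q*t))) \<noteq> 0 \<and>
                 bd41 N (fbar h1 q (h1/(q*t))) (gfun h2 (h1/(q*t))) /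
                 bd41 D (fbar h1 q (h1/(q*t))) (gfun h2 (h1/(q*t))) = gbar h2 q t)})"

definition inv_props :: "complex \<Rightarrow> complex \<Rightarrow> (nat \<Rightarrow> complex) \<Rightarrow>
    (nat \<Rightarrow> nat \<Rightarrow> complex) \<Rightarrow> (nat \<Rightarrow> nat \<Rightarrow> complex) \<Rightarrow> bool" where
  "inv_props h1 h2 u N D \<longleftrightarrow> (let q = qpar h1 h2 u in
     (\<forall>i\<in>{1..8}. bd41 N (fbar h1 q (u i)) (gbar h2 q (u i)) = 0 \<and>
                 bd41 D (fbar h1 q (u i)) (gbar h2 q (u i)) = 0) \<and>
     finite {t. \<not> (bd41 D (fbar h1 q t) (gbar h2 q t) \<noteq> 0 \<and>
                 bd41 N (fbar h1 q t) (gbar h2 q t) / bd41 D (fbar h1 q t) (gbar h2 q t)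
                   = gfun h2 (h1/(q*t)))})"

end

theory Submission
  imports Defs "HOL-Computational_Algebra.Polynomial"
begin

definition fin_mp :: "nat \<Rightarrow> ((nat \<Rightarrow> nat) \<Rightarrow> complex) \<Rightarrow> bool" where
  "fin_mp n c \<longleftrightarrow> finite {e. c e \<noteq> 0} \<and> (\<forall>e. c e \<noteq> 0 \<longrightarrow> (\<forall>i\<ge>n. e i = 0))"

definition polyfun :: "nat \<Rightarrow> ((nat \<Rightarrow> complex) \<Rightarrow> complex) \<Rightarrow> bool" where
  "polyfun n f \<longleftrightarrow> (\<exists>c. fin_mp n c \<and> (\<forall>x. mpoly_val c x = f x))"

definition mon :: "(nat \<Rightarrow> nat) \<Rightarrow> (nat \<Rightarrow> complex) \<Rightarrow> complex" where
  "mon e x = (\<Prod>i\<in>{i. e i \<noteq> 0}. x i ^ e i)"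

lemma mpoly_val_mon: "mpoly_val c x = (\<Sum>e\<in>{e. c e \<noteq> 0}. c e * mon e x)"
  unfolding mpoly_val_def mon_def by simp

lemma mpoly_val_superset:
  assumes "finite A" "{e. c e \<noteq> 0} \<subseteq> A"
  shows "mpoly_val c x = (\<Sum>e\<in>A. c e * mon e x)"
  unfolding mpoly_val_mon
  by (rule sum.mono_neutral_left) (use assms in auto)

lemma mon_eq:
  assumes "\<forall>i\<ge>n. e i = 0"
  shows "mon e x = (\<Prod>i<n. x i ^ e i)"
  unfolding mon_def
proof (rule prod.mono_neutral_left)
  show "{i. e i \<noteq> 0} \<subseteq> {..<n}" using assms by (metis (mono_tags) lessThan_iff mem_Collect_eq not_less subsetI)
qed auto

lemma polyfun_const: "polyfun n (\<lambda>x. k)"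
proof -
  define c where "c = (\<lambda>e::nat\<Rightarrow>nat. if e = (\<lambda>_. 0) then k else 0)"
  have "fin_mp n c" unfolding fin_mp_def c_def
    by (auto intro: finite_subset[of _ "{\<lambda>_. 0}"])
  moreover have "mpoly_val c x = k" for x
    by (subst mpoly_val_superset[of "{\<lambda>_. 0}"]) (auto simp: c_def mon_def)
  ultimately show ?thesis unfolding polyfun_def by blast
qed

lemma polyfun_var: assumes "i < n" shows "polyfun n (\<lambda>x. x i)"
proof -
  define ei where "ei = (\<lambda>j::nat. if j = i then 1 else (0::nat))"
  define c where "c = (\<lambda>e::nat\<Rightarrow>nat. if e = ei then 1 else (0::complex))"
  have "fin_mp n c" unfolding fin_mp_def c_def using assms
    by (auto intro: finite_subset[of _ "{ei}"] simp: ei_def)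
  moreover have "mpoly_val c x = x i" for x
  proof -
    have "{j. ei j \<noteq> 0} = {i}" by (auto simp: ei_def)
    then show ?thesis
      by (subst mpoly_val_superset[of "{ei}"]) (auto simp: c_def mon_def ei_def)
  qed
  ultimately show ?thesis unfolding polyfun_def by blast
qed

lemma polyfun_add:
  assumes "polyfun n f" "polyfun n g" shows "polyfun n (\<lambda>x. f x + g x)"
proof -
  obtain c where c: "fin_mp n c" "\<forall>x. mpoly_val c x = f x" using assms(1) unfolding polyfun_def by blast
  obtain d where d: "fin_mp n d" "\<forall>x. mpoly_val d x = g x" using assms(2) unfolding polyfun_def by blast
  define s where "s = (\<lambda>e. c e + d e)"
  let ?A = "{e. c e \<noteq> 0} \<union> {e. d e \<noteq> 0}"
  have fA: "finite ?A" using c d by (auto simp: fin_mp_def)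
  have sub: "{e. s e \<noteq> 0} \<subseteq> ?A" by (auto simp: s_def)
  have "fin_mp n s" using c d fA sub unfolding fin_mp_def s_def
    by (auto intro: finite_subset)
  moreover have "mpoly_val s x = f x + g x" for x
  proof -
    have "mpoly_val s x = (\<Sum>e\<in>?A. s e * mon e x)" by (rule mpoly_val_superset[OF fA sub])
    also have "\<dots> = (\<Sum>e\<in>?A. c e * mon e x) + (\<Sum>e\<in>?A. d e * mon e x)"
      by (simp add: s_def distrib_right sum.distrib)
    also have "(\<Sum>e\<in>?A. c e * mon e x) = mpoly_val c x"
      by (rule mpoly_val_superset[symmetric]) (use fA in auto)
    also have "(\<Sum>e\<in>?A. d e * mon e x) = mpoly_val d x"
      by (rule mpoly_val_superset[symmetric]) (use fA in auto)
    finally show ?thesis using c d by simp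
  qed
  ultimately show ?thesis unfolding polyfun_def by blast
qed

lemma polyfun_mult:
  assumes "polyfun n f" "polyfun n g" shows "polyfun n (\<lambda>x. f x * g x)"
proof -
  obtain c where c: "fin_mp n c" "\<forall>x. mpoly_val c x = f x" using assms(1) unfolding polyfun_def by blast
  obtain d where d: "fin_mp n d" "\<forall>x. mpoly_val d x = g x" using assms(2) unfolding polyfun_def by blast
  define Sc where "Sc = {e. c e \<noteq> 0}"
  define Sd where "Sd = {e. d e \<noteq> 0}"
  have fSc: "finite Sc" and fSd: "finite Sd" using c d by (auto simp: fin_mp_def Sc_def Sd_def)
  define ad where "ad = (\<lambda>(p::(nat\<Rightarrow>nat)\<times>(nat\<Rightarrow>nat)). (\<lambda>i. fst p i + snd p i))"
  define s where "s = (\<lambda>e. \<Sum>p\<in>{p\<in>Sc\<times>Sd. ad p = e}. c (fst p) * d (snd p))"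
  let ?A = "ad ` (Sc \<times> Sd)"
  have fA: "finite ?A" using fSc fSd by auto
  have sub: "{e. s e \<noteq> 0} \<subseteq> ?A"
  proof
    fix e assume "e \<in> {e. s e \<noteq> 0}"
    then have ne: "s e \<noteq> 0" by simp
    have "{p\<in>Sc\<times>Sd. ad p = e} \<noteq> {}"
    proof
      assume "{p\<in>Sc\<times>Sd. ad p = e} = {}"
      then have "s e = 0" unfolding s_def by (simp only: sum.empty)
      then show False using ne by simp
    qed
    then obtain p where "p \<in> Sc\<times>Sd" "ad p = e" by blast
    then show "e \<in> ?A" by blast
  qed
  have vars: "\<forall>i\<ge>n. e i = 0" if "e \<in> ?A" for e
    using that c d unfolding fin_mp_def Sc_def Sd_def ad_def by auto
  have "fin_mp n s" unfolding fin_mp_def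
    using fA sub vars by (auto intro: finite_subset)
  moreover have "mpoly_val s x = f x * g x" for x
  proof -
    have "mpoly_val s x = (\<Sum>e\<in>?A. s e * mon e x)" by (rule mpoly_val_superset[OF fA sub])
    also have "\<dots> = (\<Sum>e\<in>?A. \<Sum>p\<in>{p\<in>Sc\<times>Sd. ad p = e}. c (fst p) * d (snd p) * mon (ad p) x)"
      unfolding s_def sum_distrib_right by (rule sum.cong) auto
    also have "\<dots> = (\<Sum>p\<in>Sc\<times>Sd. c (fst p) * d (snd p) * mon (ad p) x)"
      by (rule sum.group) (use fSc fSd in auto)
    also have "\<dots> = (\<Sum>p\<in>Sc\<times>Sd. (c (fst p) * mon (fst p) x) * (d (snd p) * mon (snd p) x))"
    proof (rule sum.cong)
      fix p assume p: "p \<in> Sc \<times> Sd"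
      have v1: "\<forall>i\<ge>n. fst p i = 0" and v2: "\<forall>i\<ge>n. snd p i = 0"
        using p c d unfolding fin_mp_def Sc_def Sd_def by auto
      have v3: "\<forall>i\<ge>n. ad p i = 0" using v1 v2 by (auto simp: ad_def split: prod.splits)
      have "mon (ad p) x = mon (fst p) x * mon (snd p) x"
        unfolding mon_eq[OF v1] mon_eq[OF v2] mon_eq[OF v3]
        by (simp add: ad_def power_add prod.distrib split: prod.splits)
      then show "c (fst p) * d (snd p) * mon (ad p) x = (c (fst p) * mon (fst p) x) * (d (snd p) * mon (snd p) x)"
        by (simp add: mult_ac)
    qed simp
    also have "\<dots> = (\<Sum>e\<in>Sc. c e * mon e x) * (\<Sum>e\<in>Sd. d e * mon e x)"
      by (simp add: sum_product sum.cartesian_product split_beta)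
    also have "\<dots> = f x * g x" using c d by (simp add: mpoly_val_mon Sc_def Sd_def)
    finally show ?thesis .
  qed
  ultimately show ?thesis unfolding polyfun_def by blast
qed

lemma polyfun_uminus: "polyfun n f \<Longrightarrow> polyfun n (\<lambda>x. - f x)"
  using polyfun_mult[OF polyfun_const[of n "-1"]] by simp

lemma polyfun_diff: "polyfun n f \<Longrightarrow> polyfun n g \<Longrightarrow> polyfun n (\<lambda>x. f x - g x)"
  using polyfun_add[of n f "\<lambda>x. - g x"] polyfun_uminus[of n g] by simp

lemma polyfun_power: "polyfun n f \<Longrightarrow> polyfun n (\<lambda>x. f x ^ k)"
  by (induction k) (auto intro: polyfun_const polyfun_mult)

lemma polyfun_sum: "finite S \<Longrightarrow> (\<And>i. i \<in> S \<Longrightarrow> polyfun n (f i)) \<Longrightarrow> polyfun n (\<lambda>x. \<Sum>i\<in>S. f i x)"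
  by (induction S rule: finite_induct) (auto intro: polyfun_const polyfun_add)

lemma polyfun_prod: "finite S \<Longrightarrow> (\<And>i. i \<in> S \<Longrightarrow> polyfun n (f i)) \<Longrightarrow> polyfun n (\<lambda>x. \<Prod>i\<in>S. f i x)"
  by (induction S rule: finite_induct) (auto intro: polyfun_const polyfun_mult)

lemma polyfun_nonzero:
  assumes "polyfun n f" "f x0 \<noteq> 0"
  shows "\<exists>Q. nonzero_mpoly n Q \<and> (\<forall>x. mpoly_val Q x = f x)"
proof -
  obtain c where c: "fin_mp n c" "\<forall>x. mpoly_val c x = f x" using assms(1) unfolding polyfun_def by blast
  have "{e. c e \<noteq> 0} \<noteq> {}"
  proof
    assume "{e. c e \<noteq> 0} = {}"
    then have "mpoly_val c x0 = 0" unfolding mpoly_val_def by simp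
    then show False using c assms(2) by simp
  qed
  then show ?thesis using c unfolding nonzero_mpoly_def fin_mp_def by blast
qed

definition pc :: "(nat \<Rightarrow> nat \<Rightarrow> complex) \<Rightarrow> nat \<Rightarrow> complex poly" where
  "pc A j = (\<Sum>i\<le>4. monom (A i j) i)"

lemma poly_pc: "poly (pc A j) x = (\<Sum>i\<le>4. A i j * x^i)"
  unfolding pc_def by (simp add: poly_sum poly_monom)

lemma degree_pc: "degree (pc A j) \<le> 4"
  unfolding pc_def by (rule degree_sum_le) (auto intro: order_trans[OF degree_monom_le])

lemma bd41_pc: "bd41 A x y = poly (pc A 0) x + poly (pc A 1) x * y"
  unfolding bd41_def poly_pc
  by (simp add: sum.swap[of _ "{..1::nat}"] sum_distrib_right numeral_2_eq_2 atMost_Suc mult_ac)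
     (simp add: sum.distrib sum_distrib_left mult_ac)

lemma finite_sq_eq: "finite {s::complex. s^2 = a}"
proof -
  have "{s::complex. s^2 = a} \<subseteq> {s. poly [:-a, 0, 1:] s = 0}" by (auto simp: power2_eq_square)
  moreover have "finite {s. poly [:-a, 0, 1:] s = 0}" by (rule poly_roots_finite) simp
  ultimately show ?thesis by (rule finite_subset)
qed

lemma finite_X_fiber: "finite {s::complex. s \<noteq> 0 \<and> s + a/s = v}"
proof -
  have "{s::complex. s \<noteq> 0 \<and> s + a/s = v} \<subseteq> {s. poly [:a, -v, 1:] s = 0}"
  proof
    fix s assume "s \<in> {s::complex. s \<noteq> 0 \<and> s + a/s = v}"
    then have s: "s \<noteq> 0" "s + a/s = v" by auto
    then have "s * s + a = v * s" by (simp add: field_simps)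
    then show "s \<in> {s. poly [:a, -v, 1:] s = 0}" by (simp add: algebra_simps)
  qed
  moreover have "finite {s. poly [:a, -v, 1:] s = 0}" by (rule poly_roots_finite) simp
  ultimately show ?thesis by (rule finite_subset)
qed

lemma uniq_core:
  fixes a c :: complex and W :: "complex set" and N D N' D' :: "nat \<Rightarrow> nat \<Rightarrow> complex"
  assumes a0: "a \<noteq> 0" and c0: "c \<noteq> 0" and ac: "a \<noteq> c"
    and fW: "finite W" and cW: "card W \<ge> 7"
    and Wz: "\<forall>w\<in>W. w \<noteq> 0 \<and> w^2 \<noteq> a"
    and Winj: "inj_on (\<lambda>w. w + a/w) W"
    and van: "\<forall>w\<in>W. bd41 N (w + a/w) (w + c/w) = 0 \<and> bd41 D (w + a/w) (w + c/w) = 0 \<and>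
                      bd41 N' (w + a/w) (w + c/w) = 0 \<and> bd41 D' (w + a/w) (w + c/w) = 0"
    and fin: "finite {s. bd41 N' (s + a/s) (s + c/s) * bd41 D (s + a/s) (s + c/s) \<noteq>
                         bd41 N (s + a/s) (s + c/s) * bd41 D' (s + a/s) (s + c/s)}"
  shows "bd41 N' x y * bd41 D x y = bd41 N x y * bd41 D' x y"
proof -
  define n0 where "n0 = pc N 0"
  define n1 where "n1 = pc N 1"
  define d0 where "d0 = pc D 0"
  define d1 where "d1 = pc D 1"
  define n0' where "n0' = pc N' 0"
  define n1' where "n1' = pc N' 1"
  define d0' where "d0' = pc D' 0"
  define d1' where "d1' = pc D' 1"
  define F0 where "F0 = n0' * d0 - n0 * d0'"
  define F1 where "F1 = n0' * d1 + n1' * d0 - n0 * d1' - n1 * d0'"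
  define F2 where "F2 = n1' * d1 - n1 * d1'"
  define X where "X = (\<lambda>s::complex. s + a/s)"
  define Y where "Y = (\<lambda>s::complex. s + c/s)"
  have Fxy: "bd41 N' x y * bd41 D x y - bd41 N x y * bd41 D' x y =
      poly F0 x + poly F1 x * y + poly F2 x * y^2" for x y
    unfolding bd41_pc F0_def F1_def F2_def n0_def n1_def d0_def d1_def n0'_def n1'_def d0'_def d1'_def
    by (simp add: algebra_simps power2_eq_square)
  define G where "G = {s. poly F0 (X s) + poly F1 (X s) * Y s + poly F2 (X s) * (Y s)^2 = 0}"
  have finG: "finite (- G)"
  proof -
    have "- G = {s. bd41 N' (s + a/s) (s + c/s) * bd41 D (s + a/s) (s + c/s) \<noteq>
                         bd41 N (s + a/s) (s + c/s) * bd41 D' (s + a/s) (s + c/s)}"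
      unfolding G_def X_def Y_def using Fxy by (auto simp: Fxy[symmetric])
    then show ?thesis using fin by simp
  qed
  define q2 where "q2 = [:(a-c)^2, 0, c:]"
  define H0 where "H0 = smult a F0 - F2 * q2"
  define H1 where "H1 = smult a F1 + F2 * [:0, a+c:]"
  define S where "S = {s. s \<in> G \<and> a/s \<in> G \<and> s \<noteq> 0 \<and> s^2 \<noteq> a}"
  have key: "poly H0 (X s) = 0 \<and> poly H1 (X s) = 0" if sS: "s \<in> S" for s
  proof -
    have s0: "s \<noteq> 0" and sa: "s^2 \<noteq> a" and sG: "s \<in> G" and asG: "a/s \<in> G" using sS by (auto simp: S_def)
    define x where "x = X s"
    define y1 where "y1 = s + c/s"
    define y2 where "y2 = a/s + c*s/a"
    have Xa: "X (a/s) = x" unfolding X_def x_def using s0 a0 by (simp add: field_simps)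
    have Ya: "Y (a/s) = y2" unfolding Y_def y2_def using s0 a0 by (simp add: field_simps)
    define f0 where "f0 = poly F0 x"
    define f1 where "f1 = poly F1 x"
    define f2 where "f2 = poly F2 x"
    have e1: "f0 + f1 * y1 + f2 * y1^2 = 0" using sG unfolding G_def f0_def f1_def f2_def x_def y1_def Y_def by simp
    have e2: "f0 + f1 * y2 + f2 * y2^2 = 0" using asG unfolding G_def f0_def f1_def f2_def using Xa Ya by simp
    have dy: "y1 - y2 = (s^2 - a) * (a - c) / (a * s)" unfolding y1_def y2_def using s0 a0
      by (simp add: field_simps power2_eq_square)
    have dy0: "y1 - y2 \<noteq> 0" unfolding dy using s0 a0 ac sa by auto
    have "(y1 - y2) * (f1 + f2 * (y1 + y2)) = (f0 + f1 * y1 + f2 * y1^2) - (f0 + f1 * y2 + f2 * y2^2)"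
      by (simp add: algebra_simps power2_eq_square)
    also have "\<dots> = 0" using e1 e2 by simp
    finally have "(y1 - y2) * (f1 + f2 * (y1 + y2)) = 0" .
    then have "f1 + f2 * (y1 + y2) = 0" using dy0 by simp
    then have f1e: "f1 = - (f2 * (y1 + y2))" by (simp add: eq_neg_iff_add_eq_0)
    have f0e: "f0 = f2 * y1 * y2" using e1 f1e by (simp add: algebra_simps power2_eq_square)
    have sum: "y1 + y2 = x * (a + c) / a" unfolding y1_def y2_def x_def X_def using s0 a0
      by (simp add: field_simps)
    have prd: "y1 * y2 = ((a-c)^2 + c * x^2) / a" unfolding y1_def y2_def x_def X_def using s0 a0
      by (simp add: field_simps power2_eq_square)
    have "poly H0 x = a * f0 - f2 * ((a-c)^2 + c * x^2)"
      unfolding H0_def q2_def f0_def f2_def by (simp add: algebra_simps power2_eq_square)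
    also have "\<dots> = 0" using f0e prd a0 by (simp add: field_simps)
    finally have h0: "poly H0 x = 0" .
    have "poly H1 x = a * f1 + f2 * (x * (a + c))"
      unfolding H1_def f1_def f2_def by (simp add: algebra_simps)
    also have "\<dots> = 0"
    proof -
      have "a * (y1 + y2) = x * (a + c)" using sum a0 by simp
      have "a * f1 = - (f2 * (a * (y1 + y2)))" by (subst f1e) (simp add: algebra_simps)
      then show ?thesis using \<open>a * (y1 + y2) = x * (a + c)\<close> by simp
    qed
    finally have h1: "poly H1 x = 0" .
    show ?thesis using h0 h1 x_def by simp
  qed
  have finS: "finite (- S)"
  proof -
    have "- S \<subseteq> - G \<union> (\<lambda>w. a/w) ` (- G) \<union> {0} \<union> {s. s^2 = a}"
    proof
      fix s assume "s \<in> - S"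
      then consider "s \<notin> G" | "a/s \<notin> G" | "s = 0" | "s^2 = a" unfolding S_def by auto
      then show "s \<in> - G \<union> (\<lambda>w. a/w) ` (- G) \<union> {0} \<union> {s. s^2 = a}"
      proof cases
        case 2
        show ?thesis
        proof (cases "s = 0")
          case False
          then have "s = a / (a/s)" using a0 by simp
          then show ?thesis using 2 by blast
        qed simp
      qed auto
    qed
    moreover have "finite (- G \<union> (\<lambda>w. a/w) ` (- G) \<union> {0} \<union> {s. s^2 = a})"
      using finG finite_sq_eq by auto
    ultimately show ?thesis by (rule finite_subset)
  qed
  have infS: "infinite S"
  proof
    assume "finite S"
    then have "finite (S \<union> - S)" using finS by simp
    then show False by (simp add: infinite_UNIV_char_0)
  qed
  have infXS: "infinite (X ` S)"
  proof
    assume fXS: "finite (X ` S)"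
    have "S \<subseteq> (\<Union>v\<in>X ` S. {s. s \<noteq> 0 \<and> s + a/s = v})" unfolding X_def S_def by auto
    moreover have "finite (\<Union>v\<in>X ` S. {s::complex. s \<noteq> 0 \<and> s + a/s = v})"
      using fXS finite_X_fiber by blast
    ultimately show False using infS finite_subset by blast
  qed
  have H0z: "H0 = 0"
  proof (rule ccontr)
    assume "H0 \<noteq> 0"
    then have "finite {x. poly H0 x = 0}" by (rule poly_roots_finite)
    moreover have "X ` S \<subseteq> {x. poly H0 x = 0}" using key by auto
    ultimately show False using infXS finite_subset by blast
  qed
  have H1z: "H1 = 0"
  proof (rule ccontr)
    assume "H1 \<noteq> 0"
    then have "finite {x. poly H1 x = 0}" by (rule poly_roots_finite)
    moreover have "X ` S \<subseteq> {x. poly H1 x = 0}" using key by auto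
    ultimately show False using infXS finite_subset by blast
  qed
  have Q0: "a * poly F0 x = poly F2 x * ((a-c)^2 + c * x^2)" for x
  proof -
    have "poly H0 x = 0" using H0z by simp
    then show ?thesis unfolding H0_def q2_def by (simp add: algebra_simps power2_eq_square)
  qed
  have Q1: "a * poly F1 x = - poly F2 x * (x * (a + c))" for x
  proof -
    have "poly H1 x = 0" using H1z by simp
    then show ?thesis unfolding H1_def by (simp add: algebra_simps eq_neg_iff_add_eq_0)
  qed
  have rootsW: "poly F2 (X w) = 0" if wW: "w \<in> W" for w
  proof -
    have w0: "w \<noteq> 0" and wa: "w^2 \<noteq> a" using Wz wW by auto
    define x where "x = X w"
    define y1 where "y1 = w + c/w"
    define y2 where "y2 = a/w + c*w/a"
    have vN: "poly n0 x = - poly n1 x * y1" and vD: "poly d0 x = - poly d1 x * y1"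
     and vN': "poly n0' x = - poly n1' x * y1" and vD': "poly d0' x = - poly d1' x * y1"
      using van wW unfolding x_def y1_def X_def n0_def n1_def d0_def d1_def n0'_def n1'_def d0'_def d1'_def bd41_pc
      by (auto simp: eq_neg_iff_add_eq_0 algebra_simps)
    have "poly F0 x + poly F1 x * y2 + poly F2 x * y2^2 = poly F2 x * (y2 - y1)^2"
      unfolding F0_def F1_def F2_def using vN vD vN' vD'
      by (simp add: algebra_simps power2_eq_square)
    moreover have "a * (poly F0 x + poly F1 x * y2 + poly F2 x * y2^2) =
        poly F2 x * ((a-c)^2 + c * x^2 - (a+c) * x * y2 + a * y2^2)"
    proof -
      have "a * (poly F0 x + poly F1 x * y2 + poly F2 x * y2^2) =
          (a * poly F0 x) + (a * poly F1 x) * y2 + a * poly F2 x * y2^2" by (simp add: algebra_simps)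
      also have "\<dots> = poly F2 x * ((a-c)^2 + c * x^2) + (- poly F2 x * (x * (a + c))) * y2 + a * poly F2 x * y2^2"
        by (simp only: Q0 Q1)
      also have "\<dots> = poly F2 x * ((a-c)^2 + c * x^2 - (a+c) * x * y2 + a * y2^2)"
        by (simp add: algebra_simps)
      finally show ?thesis .
    qed
    moreover have "(a-c)^2 + c * x^2 - (a+c) * x * y2 + a * y2^2 = 0"
      unfolding x_def X_def y2_def using w0 a0 by (simp add: field_simps power2_eq_square)
    ultimately have "a * (poly F2 x * (y2 - y1)^2) = 0" by simp
    moreover have "y2 - y1 \<noteq> 0"
    proof -
      have "y1 - y2 = (w^2 - a) * (a - c) / (a * w)" unfolding y1_def y2_def using w0 a0
        by (simp add: field_simps power2_eq_square)
      then show ?thesis using w0 a0 ac wa by auto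
    qed
    ultimately show ?thesis using a0 x_def by simp
  qed
  have degF0: "degree F0 \<le> 8"
  proof -
    have "degree (n0' * d0) \<le> 8" using degree_mult_le[of n0' d0] degree_pc[of N' 0] degree_pc[of D 0]
      unfolding n0'_def d0_def by linarith
    moreover have "degree (n0 * d0') \<le> 8" using degree_mult_le[of n0 d0'] degree_pc[of N 0] degree_pc[of D' 0]
      unfolding n0_def d0'_def by linarith
    ultimately show ?thesis unfolding F0_def using degree_diff_le by blast
  qed
  have F2z: "F2 = 0"
  proof (rule ccontr)
    assume F2nz: "F2 \<noteq> 0"
    have q2nz: "q2 \<noteq> 0" and dq2: "degree q2 = 2" using c0 unfolding q2_def by auto
    have "smult a F0 = F2 * q2" using H0z unfolding H0_def by simp
    then have "degree F2 + 2 = degree (smult a F0)" using degree_mult_eq[OF F2nz q2nz] dq2 by simp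
    also have "\<dots> \<le> 8" using degF0 a0 by simp
    finally have dF2: "degree F2 \<le> 6" by simp
    have "F2 = 0"
    proof (rule poly_eqI_degree[of "X ` W"])
      show "poly F2 x = poly 0 x" if "x \<in> X ` W" for x using that rootsW by auto
      have "card (X ` W) = card W" using Winj card_image unfolding X_def by blast
      then show "degree F2 < card (X ` W)" "degree (0::complex poly) < card (X ` W)" using dF2 cW by auto
    qed
    then show False using F2nz by simp
  qed
  have "poly F0 x = 0" using Q0[of x] F2z a0 by simp
  moreover have "poly F1 x = 0" using Q1[of x] F2z a0 by simp
  ultimately have "bd41 N' x y * bd41 D x y - bd41 N x y * bd41 D' x y = 0" using Fxy F2z by simp
  then show ?thesis by simp
qed

definition NG :: "complex \<Rightarrow> complex \<Rightarrow> complex \<Rightarrow> (nat \<Rightarrow> complex) \<Rightarrow> nat \<Rightarrow> nat \<Rightarrow> complex" where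
  "NG a b c m i j = (if j = 0 then (if i = 0 then - (a^5 * m 1) + a^4 * b * m 1 + a^4 * c * m 1 + a^4 * m 3 - a^3 * b * c * m 1 - a^3 * b * m 3 - a^3 * c * m 3 - a^3 * m 5 + a^2 * b * c * m 3 + a^2 * b * m 5 + a^2 * c * m 5 + a^2 * m 7 - a * b * c * m 5 - a * b * m 7 - a * c * m 7 + b * c * m 7 else if i = 1 then a^5 - 2 * a^4 * b - 2 * a^4 * c + a^3 * b * m 2 + a^3 * c * m 2 - a^3 * m 4 + 2 * a^2 * b^2 * c + 2 * a^2 * b * c^2 - 2 * a^2 * b * c * m 2 + 2 * a^2 * m 6 - a * b^2 * c^2 + a * b * c * m 4 - a * b * m 6 - a * c * m 6 else if i = 2 then - (a^3 * b * m 1) - a^3 * c * m 1 + 3 * a^2 * b * c * m 1 + a^2 * m 5 - a * b * c * m 3 - 3 * a * m 7 + b * m 7 + c * m 7 else if i = 3 then a^3 * b + a^3 * c - a * b^2 * c - a * b * c^2 + a * b * c * m 2 - a * m 6 else if i = 4 then - (a * b * c * m 1) + m 7 else 0)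
    else (if j = 1 then (if i = 0 then a^5 - a^4 * b - a^4 * m 2 + a^3 * b * c + a^3 * b * m 2 + a^3 * m 4 - a^2 * b^2 * c - a^2 * b * m 4 - a^2 * m 6 + a * b * m 6 else if i = 1 then a^4 * m 1 - 2 * a^3 * b * m 1 + a^2 * b * m 3 - a^2 * m 5 + 2 * a * m 7 - b * m 7 else if i = 2 then - (a^4) + 3 * a^3 * b - 3 * a^2 * b * c - a^2 * b * m 2 + a * b^2 * c + a * m 6 else if i = 3 then a^2 * b * m 1 - m 7 else if i = 4 then - (a^2 * b) + a * b * c else 0) else 0))"

definition DG :: "complex \<Rightarrow> complex \<Rightarrow> complex \<Rightarrow> (nat \<Rightarrow> complex) \<Rightarrow> nat \<Rightarrow> nat \<Rightarrow> complex" where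
  "DG a b c m i j = (if j = 0 then (if i = 0 then - (a^5) + a^4 * c + a^4 * m 2 - a^3 * b * c - a^3 * c * m 2 - a^3 * m 4 + a^2 * b * c^2 + a^2 * c * m 4 + a^2 * m 6 - a * c * m 6 else if i = 1 then - (a^4 * m 1) + 2 * a^3 * c * m 1 - a^2 * c * m 3 + a^2 * m 5 - 2 * a * m 7 + c * m 7 else if i = 2 then a^4 - 3 * a^3 * c + 3 * a^2 * b * c + a^2 * c * m 2 - a * b * c^2 - a * m 6 else if i = 3 then - (a^2 * c * m 1) + m 7 else if i = 4 then a^2 * c - a * b * c else 0)
    else (if j = 1 then (if i = 0 then - (a^4 * m 1) + a^3 * m 3 - a^2 * m 5 + a * m 7 else if i = 1 then 2 * a^4 - a^3 * m 2 - 2 * a^2 * b * c + a * m 6 else if i = 2 then a^3 * m 1 - m 7 else if i = 3 then - (a^3) + a * b * c else if i = 4 then 0 else 0) else 0))"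


lemma bd41_expand: "bd41 A x y = A 0 0 + A 1 0 * x + A 2 0 * x^2 + A 3 0 * x^3 + A 4 0 * x^4
   + (A 0 1 + A 1 1 * x + A 2 1 * x^2 + A 3 1 * x^3 + A 4 1 * x^4) * y"
  unfolding bd41_pc poly_pc by (simp add: numeral_eq_Suc atMost_Suc algebra_simps)

definition UG :: "complex \<Rightarrow> complex \<Rightarrow> complex \<Rightarrow> (nat \<Rightarrow> complex) \<Rightarrow> complex \<Rightarrow> complex" where
  "UG a b c m s = s^8 - m 1 * s^7 + m 2 * s^6 - m 3 * s^5 + m 4 * s^4 - m 5 * s^3 + m 6 * s^2 - m 7 * s + a^2*b*c"

lemma DG_curve:
  assumes "s \<noteq> 0"
  shows "s^4 * bd41 (DG a b c m) (s + a/s) (s + c/s) = a^2*(c-a) * UG a b c m s"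
  unfolding bd41_expand DG_def UG_def using assms
  by (simp add: field_simps) algebra

lemma NG_curve:
  assumes "s \<noteq> 0"
  shows "s^5 * bd41 (NG a b c m) (s + a/s) (s + c/s) = a*(c-a)*(a^2 + b*s^2) * UG a b c m s"
  unfolding bd41_expand NG_def UG_def using assms
  by (simp add: field_simps) algebra

definition PnG :: "(nat \<Rightarrow> complex) \<Rightarrow> complex \<Rightarrow> complex \<Rightarrow> complex" where
  "PnG m h x = m 0 * x^4 - m 1 * x^3 + (m 2 - 3*h*m 0 - m 8 / h^3) * x^2
     + (2*h*m 1 - m 3 + m 7 / h^2) * x
     + (h^2 * m 0 - h * m 2 + m 4 - m 6 / h + m 8 / h^2)"

definition PdG :: "(nat \<Rightarrow> complex) \<Rightarrow> complex \<Rightarrow> complex \<Rightarrow> complex" where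
  "PdG m h x = m 8 * x^4 - h * m 7 * x^3 + (h^2 * m 6 - 3*h*m 8 - h^5 * m 0) * x^2
     + (2*h^2 * m 7 - h^3 * m 5 + h^5 * m 1) * x
     + (h^6 * m 0 - h^5 * m 2 + h^4 * m 4 - h^3 * m 6 + h^2 * m 8)"

lemma Pn_eq: "Pn u h x = PnG (msym u) h x" by (simp add: Pn_def PnG_def Let_def)
lemma Pd_eq: "Pd u h x = PdG (msym u) h x" by (simp add: Pd_def PdG_def Let_def)

definition relG :: "complex \<Rightarrow> complex \<Rightarrow> complex \<Rightarrow> (nat \<Rightarrow> complex) \<Rightarrow> complex \<Rightarrow> complex \<Rightarrow> complex \<Rightarrow> bool" where
  "relG a b c m x y z \<longleftrightarrow>
     ((x - z) * (x - y) - (a - b) * (a - c) * (1/a)) /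
     ((x/a - z/b) * (x/a - y/c) - (1/a - 1/b) * (1/a - 1/c) * a)
     = a^4 * b * c * (PnG m a x / PdG m a x)"

lemma relG_sym: "relG a b c m x y z = relG a c b m x z y"
  unfolding relG_def by (simp add: mult_ac)

lemma idI:
  assumes "a \<noteq> 0" "b \<noteq> 0" "c \<noteq> 0" "m 0 = 1" "m 8 = a^2*b*c"
  shows "PdG m a x * ((x - z) * (x - y) - (a - b) * (a - c) * (1/a))
     - a^4*b*c * PnG m a x * ((x/a - z/b) * (x/a - y/c) - (1/a - 1/b) * (1/a - 1/c) * a)
     = a * x * (z * bd41 (DG a b c m) x y - bd41 (NG a b c m) x y)"
  unfolding bd41_expand DG_def NG_def PnG_def PdG_def assms(4,5) using assms(1-3)
  by (simp add: field_simps) algebra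

definition FctG :: "complex \<Rightarrow> complex \<Rightarrow> complex \<Rightarrow> (nat \<Rightarrow> complex) \<Rightarrow> complex \<Rightarrow> complex \<Rightarrow> complex" where
  "FctG a b c m x y = (b * x * bd41 (DG a b c m) x y - a * bd41 (NG a b c m) x y) * (c * x - a * y)
      - a * (a - b) * (a - c) * bd41 (DG a b c m) x y"

lemma relG_iff:
  assumes a0: "a \<noteq> 0" and b0: "b \<noteq> 0" and c0: "c \<noteq> 0" and m0: "m 0 = 1" and m8: "m 8 = a^2*b*c"
    and x0: "x \<noteq> 0" and Pd0: "PdG m a x \<noteq> 0" and Pn0: "PnG m a x \<noteq> 0"
    and D0: "bd41 (DG a b c m) x y \<noteq> 0" and F0: "FctG a b c m x y \<noteq> 0"
  shows "relG a b c m x y z \<longleftrightarrow> z = bd41 (NG a b c m) x y / bd41 (DG a b c m) x y"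
proof -
  define N where "N = bd41 (NG a b c m) x y"
  define D where "D = bd41 (DG a b c m) x y"
  define Num where "Num = (\<lambda>z. (x - z) * (x - y) - (a - b) * (a - c) * (1/a))"
  define Den where "Den = (\<lambda>z. (x/a - z/b) * (x/a - y/c) - (1/a - 1/b) * (1/a - 1/c) * a)"
  define K where "K = a^4*b*c"
  define Pd where "Pd = PdG m a x"
  define Pn where "Pn = PnG m a x"
  have I: "Pd * Num w - K * Pn * Den w = a * x * (w * D - N)" for w
    using idI[OF a0 b0 c0 m0 m8, of x w y] unfolding Num_def Den_def K_def Pd_def Pn_def N_def D_def by simp
  have rel: "relG a b c m x y z \<longleftrightarrow> Num z / Den z = K * (Pn / Pd)"
    unfolding relG_def Num_def Den_def K_def Pn_def Pd_def by simp
  have K0: "K \<noteq> 0" using a0 b0 c0 by (simp add: K_def)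
  have D0': "D \<noteq> 0" using D0 by (simp add: D_def)
  have "Den (N/D) * (a^2*b*c*D) = FctG a b c m x y"
    unfolding Den_def FctG_def N_def[symmetric] D_def[symmetric] using a0 b0 c0 D0'
    by (simp add: field_simps) algebra
  then have DenS: "Den (N/D) \<noteq> 0" using F0 by auto
  show ?thesis
  proof
    assume r: "relG a b c m x y z"
    have Dz: "Den z \<noteq> 0"
    proof
      assume "Den z = 0"
      then have "K * (Pn / Pd) = 0" using r rel by simp
      then show False using K0 Pn0 Pd0 by (simp add: Pn_def Pd_def)
    qed
    have "Num z = K * (Pn / Pd) * Den z" using r rel Dz by (simp add: divide_eq_eq)
    then have "Pd * Num z - K * Pn * Den z = 0" using Pd0 by (simp add: Pd_def field_simps)
    then have "a * x * (z * D - N) = 0" using I by simp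
    then have "z * D = N" using a0 x0 by simp
    then show "z = bd41 (NG a b c m) x y / bd41 (DG a b c m) x y"
      using D0' by (simp add: N_def D_def eq_divide_eq)
  next
    assume "z = bd41 (NG a b c m) x y / bd41 (DG a b c m) x y"
    then have z: "z = N / D" by (simp add: N_def D_def)
    have "Pd * Num z - K * Pn * Den z = 0" using I[of z] z D0' by simp
    then have "Num z = K * Pn * Den z / Pd" using Pd0 by (simp add: Pd_def field_simps)
    then show "relG a b c m x y z" using rel DenS z Pd0 by (simp add: Pd_def)
  qed
qed

lemma coeff_pc: "coeff (pc A j) k = (if k \<le> 4 then A k j else 0)"
  unfolding pc_def coeff_sum by (simp add: coeff_monom)

lemma Pd_roots: assumes "m 8 \<noteq> 0" shows "finite {x. PdG m h x = 0}"
proof -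
  define p where "p = [:h^6 * m 0 - h^5 * m 2 + h^4 * m 4 - h^3 * m 6 + h^2 * m 8,
      2*h^2 * m 7 - h^3 * m 5 + h^5 * m 1, h^2 * m 6 - 3*h*m 8 - h^5 * m 0, - h * m 7, m 8:]"
  have "PdG m h x = poly p x" for x unfolding PdG_def p_def by (simp add: algebra_simps power_numeral_reduce)
  moreover have "p \<noteq> 0" using assms by (simp add: p_def)
  ultimately show ?thesis using poly_roots_finite[of p] by simp
qed

lemma Pn_roots: assumes "m 0 \<noteq> 0" shows "finite {x. PnG m h x = 0}"
proof -
  define p where "p = [:h^2 * m 0 - h * m 2 + m 4 - m 6 / h + m 8 / h^2, 2*h*m 1 - m 3 + m 7 / h^2,
      m 2 - 3*h*m 0 - m 8 / h^3, - m 1, m 0:]"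
  have "PnG m h x = poly p x" for x unfolding PnG_def p_def by (simp add: algebra_simps power_numeral_reduce)
  moreover have "p \<noteq> 0" using assms by (simp add: p_def)
  ultimately show ?thesis using poly_roots_finite[of p] by simp
qed

lemma D_roots: assumes "A 4 0 \<noteq> 0" shows "finite {x. bd41 A x 0 = 0}"
proof -
  have "pc A 0 \<noteq> 0"
  proof
    assume "pc A 0 = 0"
    then have "coeff (pc A 0) 4 = 0" by simp
    then show False using assms by (simp add: coeff_pc)
  qed
  then have "finite {x. poly (pc A 0) x = 0}" by (rule poly_roots_finite)
  then show ?thesis by (simp add: bd41_pc)
qed

lemma Fct_roots:
  assumes "b \<noteq> 0" "c \<noteq> 0" "DG a b c m 4 0 \<noteq> 0"
  shows "finite {x. FctG a b c m x 0 = 0}"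
proof -
  define p where "p = monom c 1 * (monom b 1 * pc (DG a b c m) 0 - smult a (pc (NG a b c m) 0))
      - smult (a * (a - b) * (a - c)) (pc (DG a b c m) 0)"
  have "FctG a b c m x 0 = poly p x" for x
    unfolding FctG_def p_def bd41_pc by (simp add: poly_monom algebra_simps)
  moreover have "p \<noteq> 0"
  proof
    assume "p = 0"
    then have "coeff p 6 = 0" by simp
    moreover have "coeff p 6 = c * (b * DG a b c m 4 0)"
      unfolding p_def by (simp add: coeff_monom_mult coeff_pc)
    ultimately show False using assms by simp
  qed
  ultimately show ?thesis using poly_roots_finite[of p] by simp
qed

lemma msym_0: "msym u 0 = 1"
proof -
  have "{S. S \<subseteq> {1..8::nat} \<and> card S = 0} = {{}}"
    by (auto dest: finite_subset[OF _ finite_atLeastAtMost])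
  then show ?thesis unfolding msym_def by simp
qed

lemma msym_8: "msym u 8 = (\<Prod>i\<in>{1..8::nat}. u i)"
proof -
  have "{S. S \<subseteq> {1..8::nat} \<and> card S = 8} = {{1..8}}"
  proof
    show "{S. S \<subseteq> {1..8::nat} \<and> card S = 8} \<subseteq> {{1..8}}"
    proof
      fix S assume "S \<in> {S. S \<subseteq> {1..8::nat} \<and> card S = 8}"
      then have "S \<subseteq> {1..8}" "card S = card {1..8::nat}" by auto
      then have "S = {1..8}" using card_subset_eq by blast
      then show "S \<in> {{1..8}}" by simp
    qed
  qed auto
  then show ?thesis unfolding msym_def by simp
qed

lemma vieta8: "(\<Prod>i\<in>{1..8::nat}. z - u i) = (\<Sum>k\<le>8. (-1)^k * msym u k * z^(8-k))"
proof -
  let ?A = "{1..8::nat}"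
  have "(\<Prod>i\<in>?A. z - u i) = (\<Sum>X\<in>Pow ?A. (-1) ^ card X * (\<Prod>i\<in>X. u i) * (\<Prod>i\<in>?A-X. z))"
    by (rule prod_diff_conv_sum) simp
  also have "\<dots> = (\<Sum>X\<in>Pow ?A. (-1) ^ card X * (\<Prod>i\<in>X. u i) * z^(8 - card X))"
  proof (rule sum.cong)
    fix X assume "X \<in> Pow ?A"
    then have "card (?A - X) = 8 - card X" by (simp add: card_Diff_subset finite_subset)
    then show "(-1) ^ card X * (\<Prod>i\<in>X. u i) * (\<Prod>i\<in>?A-X. z) = (-1) ^ card X * (\<Prod>i\<in>X. u i) * z^(8 - card X)"
      by simp
  qed simp
  also have "\<dots> = (\<Sum>k\<le>8. \<Sum>X\<in>{X\<in>Pow ?A. card X = k}. (-1) ^ card X * (\<Prod>i\<in>X. u i) * z^(8 - card X))"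
  proof (rule sum.group[symmetric])
    show "card ` Pow ?A \<subseteq> {..8}"
    proof
      fix k assume "k \<in> card ` Pow ?A"
      then obtain X where "X \<subseteq> ?A" "k = card X" by auto
      then have "k \<le> card ?A" using card_mono[of ?A X] by simp
      then show "k \<in> {..8}" by simp
    qed
  qed auto
  also have "\<dots> = (\<Sum>k\<le>8. (-1)^k * msym u k * z^(8-k))"
  proof (rule sum.cong)
    fix k assume "k \<in> {..8::nat}"
    have "(\<Sum>X\<in>{X\<in>Pow ?A. card X = k}. (-1) ^ card X * (\<Prod>i\<in>X. u i) * z^(8 - card X))
        = (\<Sum>X\<in>{X\<in>Pow ?A. card X = k}. (-1) ^ k * z^(8 - k) * (\<Prod>i\<in>X. u i))"
      by (rule sum.cong) auto
    also have "\<dots> = (-1)^k * z^(8-k) * msym u k"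
      unfolding msym_def sum_distrib_left[symmetric] by (simp add: Pow_def)
    finally show "(\<Sum>X\<in>{X\<in>Pow ?A. card X = k}. (-1) ^ card X * (\<Prod>i\<in>X. u i) * z^(8 - card X))
        = (-1)^k * msym u k * z^(8-k)" by (simp add: mult_ac)
  qed simp
  finally show ?thesis .
qed

lemma UG_prod:
  assumes "m = msym u" "m 8 = a^2*b*c"
  shows "UG a b c m z = (\<Prod>i\<in>{1..8::nat}. z - u i)"
proof -
  have "(\<Sum>k\<le>8. (-1)^k * msym u k * z^(8-k)) = UG a b c m z"
    using assms msym_0[of u]
    by (simp add: UG_def numeral_eq_Suc atMost_Suc)
  then show ?thesis using vieta8 by simp
qed

definition PP :: "(nat \<Rightarrow> complex) \<Rightarrow> complex" where
  "PP v = (\<Prod>k\<in>{1..8::nat}. v (k+1))"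

definition fQ :: "(nat \<Rightarrow> complex) \<Rightarrow> complex" where
  "fQ v = v 0 * v 1 * PP v * (PP v - v 0 * v 1^3) * ((PP v)^2 - v 0^3 * v 1^5)
     * (\<Prod>i\<in>{1..8::nat}. \<Prod>j\<in>{1..8::nat}. (v (i+1) * v (j+1) * v 0 * v 1^2 - PP v))
     * (\<Prod>i\<in>{1..8::nat}. \<Prod>j\<in>{1..8::nat}-{i}. (v (i+1) - v (j+1)))"

lemma polyfun_PP: "polyfun 10 PP"
  unfolding PP_def by (rule polyfun_prod) (auto intro: polyfun_var)

lemma polyfun_fQ: "polyfun 10 fQ"
proof -
  have v: "polyfun 10 (\<lambda>v. v i)" if "i < 10" for i using that by (rule polyfun_var)
  have v0: "polyfun 10 (\<lambda>v. v 0)" and v1: "polyfun 10 (\<lambda>v. v 1)" using v by auto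
  have vi: "polyfun 10 (\<lambda>v. v (i+1))" if "i \<in> {1..8::nat}" for i using that v by auto
  show ?thesis unfolding fQ_def
    by (intro polyfun_mult polyfun_diff polyfun_power polyfun_prod finite_atLeastAtMost finite_Diff
        v0 v1 vi polyfun_PP) auto
qed

definition x0Q :: "nat \<Rightarrow> complex" where "x0Q i = (if i \<le> 1 then 1 else of_nat (i - 1))"

lemma PP_x0: "PP x0Q = 40320"
proof -
  have "PP x0Q = (\<Prod>k\<in>{1..8::nat}. of_nat k)"
    unfolding PP_def x0Q_def by (rule prod.cong) auto
  also have "\<dots> = of_nat (\<Prod>k\<in>{1..8::nat}. k)" by simp
  also have "(\<Prod>k\<in>{1..8::nat}. k) = 40320"
  proof -
    have "{1..8::nat} = {1,2,3,4,5,6,7,8}" by auto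
    then show ?thesis by simp
  qed
  finally show ?thesis by simp
qed

lemma fQ_x0: "fQ x0Q \<noteq> 0"
proof -
  have x01: "x0Q 0 = 1" "x0Q 1 = 1" by (auto simp: x0Q_def)
  have xi: "x0Q (i+1) = of_nat i" if "i \<in> {1..8::nat}" for i using that by (auto simp: x0Q_def)
  have A: "x0Q (i+1) * x0Q (j+1) * x0Q 0 * x0Q 1^2 - PP x0Q \<noteq> 0" if "i \<in> {1..8::nat}" "j \<in> {1..8::nat}" for i j
  proof -
    have "i * j \<le> 8 * 8" using that by (intro mult_mono) auto
    then have "i * j \<noteq> 40320" by simp
    then have "(of_nat (i*j) :: complex) \<noteq> of_nat 40320" by (metis of_nat_eq_iff)
    then have "(of_nat i * of_nat j :: complex) \<noteq> 40320" by simp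
    then show ?thesis by (simp only: xi[OF that(1)] xi[OF that(2)] x01 PP_x0) simp
  qed
  have B: "x0Q (i+1) - x0Q (j+1) \<noteq> 0" if "i \<in> {1..8::nat}" "j \<in> {1..8::nat}-{i}" for i j
    using that by (simp add: x0Q_def)
  have C: "(\<Prod>i\<in>{1..8::nat}. \<Prod>j\<in>{1..8::nat}. (x0Q (i+1) * x0Q (j+1) * x0Q 0 * x0Q 1^2 - PP x0Q)) \<noteq> 0"
    using A by (simp add: prod_zero_iff)
  have D: "(\<Prod>i\<in>{1..8::nat}. \<Prod>j\<in>{1..8::nat}-{i}. (x0Q (i+1) - x0Q (j+1))) \<noteq> 0"
    using B by (simp add: prod_zero_iff)
  have E: "x0Q 0 * x0Q 1 * PP x0Q * (PP x0Q - x0Q 0 * x0Q 1^3) * ((PP x0Q)^2 - x0Q 0^3 * x0Q 1^5) \<noteq> 0"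
    unfolding PP_x0 by (simp add: x0Q_def)
  show ?thesis unfolding fQ_def using C D E by (simp only: mult_eq_0_iff de_Morgan_disj) simp
qed

definition conds :: "complex \<Rightarrow> complex \<Rightarrow> (nat \<Rightarrow> complex) \<Rightarrow> bool" where
  "conds h1 h2 u \<longleftrightarrow> h1 \<noteq> 0 \<and> h2 \<noteq> 0 \<and> (\<Prod>i\<in>{1..8::nat}. u i) \<noteq> 0 \<and>
     (\<Prod>i\<in>{1..8::nat}. u i) \<noteq> h1 * h2^3 \<and> (\<Prod>i\<in>{1..8::nat}. u i)^2 \<noteq> h1^3 * h2^5 \<and>
     (\<forall>i\<in>{1..8::nat}. \<forall>j\<in>{1..8::nat}. u i * u j * h1 * h2^2 \<noteq> (\<Prod>i\<in>{1..8::nat}. u i)) \<and>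
     (\<forall>i\<in>{1..8::nat}. \<forall>j\<in>{1..8::nat}. i \<noteq> j \<longrightarrow> u i \<noteq> u j)"

lemma pv: "param_vec h1 h2 u 0 = h1" "param_vec h1 h2 u 1 = h2"
  "i \<ge> 1 \<Longrightarrow> param_vec h1 h2 u (i+1) = u i" "i \<ge> 1 \<Longrightarrow> param_vec h1 h2 u (Suc i) = u i"
  by (auto simp: param_vec_def)

lemma Q_conds:
  assumes "fQ (param_vec h1 h2 u) \<noteq> 0"
  shows "conds h1 h2 u"
proof -
  define v where "v = param_vec h1 h2 u"
  define P where "P = (\<Prod>i\<in>{1..8::nat}. u i)"
  have PPv: "PP v = P" unfolding PP_def P_def v_def by (rule prod.cong) (auto simp: pv)
  have Pi1: "(\<Prod>i\<in>{1..8::nat}. \<Prod>j\<in>{1..8::nat}. (v (i+1) * v (j+1) * v 0 * v 1^2 - PP v))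
      = (\<Prod>i\<in>{1..8::nat}. \<Prod>j\<in>{1..8::nat}. (u i * u j * h1 * h2^2 - P))"
    unfolding PPv by (intro prod.cong refl) (auto simp: v_def param_vec_def)
  have Pi2: "(\<Prod>i\<in>{1..8::nat}. \<Prod>j\<in>{1..8::nat}-{i}. (v (i+1) - v (j+1)))
      = (\<Prod>i\<in>{1..8::nat}. \<Prod>j\<in>{1..8::nat}-{i}. (u i - u j))"
    by (intro prod.cong refl) (auto simp: v_def param_vec_def)
  have "fQ v = h1 * h2 * P * (P - h1 * h2^3) * (P^2 - h1^3 * h2^5)
     * (\<Prod>i\<in>{1..8::nat}. \<Prod>j\<in>{1..8::nat}. (u i * u j * h1 * h2^2 - P))
     * (\<Prod>i\<in>{1..8::nat}. \<Prod>j\<in>{1..8::nat}-{i}. (u i - u j))"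
    unfolding fQ_def Pi1 Pi2 PPv by (simp add: v_def param_vec_def)
  then have nz: "h1 * h2 * P * (P - h1 * h2^3) * (P^2 - h1^3 * h2^5)
     * (\<Prod>i\<in>{1..8::nat}. \<Prod>j\<in>{1..8::nat}. (u i * u j * h1 * h2^2 - P))
     * (\<Prod>i\<in>{1..8::nat}. \<Prod>j\<in>{1..8::nat}-{i}. (u i - u j)) \<noteq> 0"
    using assms v_def by simp
  then have A: "h1 \<noteq> 0" "h2 \<noteq> 0" "P \<noteq> 0" "P \<noteq> h1 * h2^3" "P^2 \<noteq> h1^3 * h2^5"
    and B: "(\<Prod>i\<in>{1..8::nat}. \<Prod>j\<in>{1..8::nat}. (u i * u j * h1 * h2^2 - P)) \<noteq> 0"
    and C: "(\<Prod>i\<in>{1..8::nat}. \<Prod>j\<in>{1..8::nat}-{i}. (u i - u j)) \<noteq> 0"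
    by (simp_all only: mult_eq_0_iff de_Morgan_disj eq_iff_diff_eq_0[symmetric]) simp_all
  have B': "\<forall>i\<in>{1..8::nat}. \<forall>j\<in>{1..8::nat}. u i * u j * h1 * h2^2 \<noteq> P"
    using B by (simp add: prod_zero_iff)
  have C': "\<forall>i\<in>{1..8::nat}. \<forall>j\<in>{1..8::nat}. i \<noteq> j \<longrightarrow> u i \<noteq> u j"
    using C by (simp add: prod_zero_iff)
  show ?thesis unfolding conds_def using A B' C' P_def by simp
qed

lemma UG_swap: "UG a c b m = UG a b c m"
  unfolding UG_def by (simp add: mult_ac fun_eq_iff)

lemma DG40: "DG a b c m 4 0 = a * c * (a - b)"
  by (simp add: DG_def algebra_simps power2_eq_square)

lemma curve_map:
  assumes s0: "s \<noteq> 0" and a0: "a \<noteq> 0" and ac: "a \<noteq> c" and U0: "UG a b c m s \<noteq> 0"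
  shows "bd41 (DG a b c m) (s + a/s) (s + c/s) \<noteq> 0 \<and>
         bd41 (NG a b c m) (s + a/s) (s + c/s) / bd41 (DG a b c m) (s + a/s) (s + c/s) = a/s + b*s/a"
proof -
  define Dv where "Dv = bd41 (DG a b c m) (s + a/s) (s + c/s)"
  define Nv where "Nv = bd41 (NG a b c m) (s + a/s) (s + c/s)"
  have hD: "s^4 * Dv = a^2*(c-a) * UG a b c m s" using DG_curve[OF s0] by (simp add: Dv_def)
  have hN: "s^5 * Nv = a*(c-a)*(a^2 + b*s^2) * UG a b c m s" using NG_curve[OF s0] by (simp add: Nv_def)
  have ca: "c - a \<noteq> 0" using ac by simp
  have D0: "Dv \<noteq> 0"
  proof
    assume "Dv = 0"
    then have "a^2*(c-a) * UG a b c m s = 0" using hD by simp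
    then show False using a0 ca U0 by simp
  qed
  have "s^5 * Nv = s^5 * ((a/s + b*s/a) * Dv)"
  proof -
    have e: "s^5 = s * s^4" by (simp add: eval_nat_numeral)
    have "s^5 * ((a/s + b*s/a) * Dv) = s * (a/s + b*s/a) * (s^4 * Dv)" unfolding e by (simp only: mult_ac)
    also have "\<dots> = s * (a/s + b*s/a) * (a^2*(c-a) * UG a b c m s)" using hD by simp
    also have "\<dots> = a*(c-a)*(a^2 + b*s^2) * UG a b c m s" using s0 a0
      by (simp add: field_simps power2_eq_square)
    finally show ?thesis using hN by simp
  qed
  then have "Nv = (a/s + b*s/a) * Dv" using s0 by simp
  then show ?thesis using D0 by (simp add: Nv_def[symmetric] Dv_def[symmetric])
qed

lemma curve_van:
  assumes s0: "s \<noteq> 0" and U0: "UG a b c m s = 0"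
  shows "bd41 (DG a b c m) (s + a/s) (s + c/s) = 0 \<and> bd41 (NG a b c m) (s + a/s) (s + c/s) = 0"
  using DG_curve[OF s0, of a b c m] NG_curve[OF s0, of a b c m] U0 s0 by simp

lemma main_generic:
  assumes cnd: "conds h1 h2 u"
  shows "\<exists>N D N2 D2.
         (\<exists>E. nonzero_mpoly 2 E \<and> (\<forall>x y. mpoly_val E (pt2 x y) \<noteq> 0 \<longrightarrow>
            (\<forall>z. relB h1 h2 u x y z \<longleftrightarrow> z = bd41 N x y / bd41 D x y))) \<and>
         (\<exists>E. nonzero_mpoly 2 E \<and> (\<forall>x z. mpoly_val E (pt2 x z) \<noteq> 0 \<longrightarrow>
            (\<forall>y. relB h1 h2 u x y z \<longleftrightarrow> y = bd41 N2 x z / bd41 D2 x z))) \<and>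
         fwd_props h1 h2 u N D \<and> inv_props h1 h2 u N2 D2 \<and>
         (\<forall>N' D'. fwd_props h1 h2 u N' D' \<longrightarrow>
            (\<forall>x y. bd41 N' x y * bd41 D x y = bd41 N x y * bd41 D' x y)) \<and>
         (\<forall>N' D'. inv_props h1 h2 u N' D' \<longrightarrow>
            (\<forall>x y. bd41 N' x y * bd41 D2 x y = bd41 N2 x y * bd41 D' x y))"
proof -
  define P where "P = (\<Prod>i\<in>{1..8::nat}. u i)"
  have h10: "h1 \<noteq> 0" and h20: "h2 \<noteq> 0" and P0: "P \<noteq> 0" and Pac: "P \<noteq> h1 * h2^3"
    and Pab: "P^2 \<noteq> h1^3 * h2^5"
    and Puu: "\<forall>i\<in>{1..8::nat}. \<forall>j\<in>{1..8::nat}. u i * u j * h1 * h2^2 \<noteq> P"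
    and uinj: "\<forall>i\<in>{1..8::nat}. \<forall>j\<in>{1..8::nat}. i \<noteq> j \<longrightarrow> u i \<noteq> u j"
    using cnd unfolding conds_def P_def by auto
  define q where "q = qpar h1 h2 u"
  define a where "a = h1 / q"
  define b where "b = h2 * q"
  define c where "c = h2"
  define m where "m = msym u"
  have qP: "q = h1^2 * h2^2 / P" unfolding q_def qpar_def P_def by simp
  have q0: "q \<noteq> 0" using h10 h20 P0 qP by simp
  have aP: "a = P / (h1 * h2^2)" unfolding a_def qP using h10 h20 P0 by (simp add: field_simps power2_eq_square)
  have bP: "b = h1^2 * h2^3 / P" unfolding b_def qP using h10 h20 P0 by (simp add: field_simps power2_eq_square power3_eq_cube)
  have a0: "a \<noteq> 0" using aP P0 h10 h20 by simp
  have b0: "b \<noteq> 0" using bP P0 h10 h20 by simp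
  have c0: "c \<noteq> 0" using h20 c_def by simp
  have ac: "a \<noteq> c"
  proof
    assume "a = c"
    then have "P / (h1 * h2^2) = h2" using aP c_def by simp
    then have "P = h1 * h2^3" using h10 h20 by (simp add: field_simps power2_eq_square power3_eq_cube)
    then show False using Pac by simp
  qed
  have ab: "a \<noteq> b"
  proof
    assume "a = b"
    then have "P / (h1 * h2^2) = h1^2 * h2^3 / P" using aP bP by simp
    then have "P^2 = h1^3 * h2^5" using h10 h20 P0 by (simp add: field_simps) (simp add: algebra_simps eval_nat_numeral)
    then show False using Pab by simp
  qed
  have m0: "m 0 = 1" using msym_0 m_def by simp
  have m8: "m 8 = a^2*b*c"
  proof -
    have "m 8 = P" using msym_8 m_def P_def by simp
    also have "P = a^2*b*c" unfolding aP bP c_def using h10 h20 P0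
      by (simp add: field_simps) (simp add: algebra_simps eval_nat_numeral)
    finally show ?thesis .
  qed
  have m8': "m 8 = a^2*c*b" using m8 by (simp add: mult_ac)
  define W where "W = u ` {1..8::nat}"
  have u0: "u i \<noteq> 0" if "i \<in> {1..8::nat}" for i using P0 that unfolding P_def by (simp add: prod_zero_iff)
  have uua: "u i * u j \<noteq> a" if "i \<in> {1..8::nat}" "j \<in> {1..8::nat}" for i j
  proof
    assume "u i * u j = a"
    then have "u i * u j * h1 * h2^2 = P" unfolding aP using h10 h20 by (simp add: field_simps)
    then show False using Puu that by blast
  qed
  have Wz: "\<forall>w\<in>W. w \<noteq> 0 \<and> w^2 \<noteq> a" unfolding W_def using u0 uua by (auto simp: power2_eq_square)
  have fW: "finite W" unfolding W_def by simp
  have uinj': "inj_on u {1..8::nat}"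
  proof (rule inj_onI)
    fix i j assume "i \<in> {1..8::nat}" "j \<in> {1..8::nat}" "u i = u j"
    then show "i = j" using uinj by blast
  qed
  have cW: "card W = 8" unfolding W_def using card_image[OF uinj'] by simp
  have Winj: "inj_on (\<lambda>w. w + a/w) W"
  proof (rule inj_onI)
    fix w1 w2 assume w1: "w1 \<in> W" and w2: "w2 \<in> W" and e: "w1 + a/w1 = w2 + a/w2"
    obtain i j where ij: "i \<in> {1..8::nat}" "j \<in> {1..8::nat}" "w1 = u i" "w2 = u j" using w1 w2 W_def by auto
    have w10: "w1 \<noteq> 0" and w20: "w2 \<noteq> 0" using Wz w1 w2 by auto
    have "(w1 - w2) * (w1 * w2 - a) = 0" using e w10 w20 by (simp add: field_simps)
    moreover have "w1 * w2 \<noteq> a" using uua ij by simp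
    ultimately show "w1 = w2" by simp
  qed
  have UGp: "UG a b c m z = (\<Prod>i\<in>{1..8::nat}. z - u i)" for z using UG_prod[OF m_def m8] .
  have UGW: "UG a b c m w = 0" if "w \<in> W" for w
    using that unfolding W_def UGp by (auto simp: prod_zero_iff)
  have UGr: "UG a b c m z = 0 \<Longrightarrow> z \<in> W" for z
    unfolding UGp W_def by (auto simp: prod_zero_iff)
  have fbar_eq: "fbar h1 q w = w + a/w" for w unfolding fbar_def a_def by simp
  have gfun_eq: "gfun h2 w = w + c/w" for w unfolding gfun_def c_def by simp
  have gbar_eq: "gbar h2 q w = w + b/w" for w unfolding gbar_def b_def by simp
  have sig: "h1 / (q * t) = a / t" for t unfolding a_def by simp

  have relBG: "relB h1 h2 u x y z = relG a b c m x y z" for x y z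
  proof -
    have K: "h1^4 * h2^2 / q^3 = (h1/q)^4 * (h2*q) * h2" using q0 by (simp add: field_simps eval_nat_numeral)
    show ?thesis unfolding relB_def relG_def Let_def q_def[symmetric] Pn_eq Pd_eq m_def[symmetric] K
      unfolding a_def b_def c_def by simp
  qed
  have finU: "finite {t. t = 0 \<or> t \<in> W}" using fW by simp
  have E1: "\<exists>E. nonzero_mpoly 2 E \<and> (\<forall>x y. mpoly_val E (pt2 x y) \<noteq> 0 \<longrightarrow>
            (\<forall>z. relB h1 h2 u x y z \<longleftrightarrow> z = bd41 (NG a b c m) x y / bd41 (DG a b c m) x y))"
  proof -
    define fE where "fE = (\<lambda>v::nat\<Rightarrow>complex. v 0 * PdG m a (v 0) * PnG m a (v 0) * bd41 (DG a b c m) (v 0) (v 1) * FctG a b c m (v 0) (v 1))"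
    have pf: "polyfun 2 fE" unfolding fE_def PdG_def PnG_def FctG_def bd41_def
      by (intro polyfun_mult polyfun_add polyfun_diff polyfun_power polyfun_sum polyfun_const polyfun_var finite_atMost) auto
    have fin: "finite ({0} \<union> {x. PdG m a x = 0} \<union> {x. PnG m a x = 0} \<union> {x. bd41 (DG a b c m) x 0 = 0} \<union> {x. FctG a b c m x 0 = 0})"
      using Pd_roots[of m a] Pn_roots[of m a] D_roots[of "DG a b c m"] Fct_roots[OF b0 c0, of a m]
        m8 m0 a0 b0 c0 ab DG40[of a b c m] by simp
    obtain x0 where x0: "x0 \<notin> {0} \<union> {x. PdG m a x = 0} \<union> {x. PnG m a x = 0} \<union> {x. bd41 (DG a b c m) x 0 = 0} \<union> {x. FctG a b c m x 0 = 0}"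
      using ex_new_if_finite[OF infinite_UNIV_char_0 fin] by blast
    have "fE (pt2 x0 0) \<noteq> 0" using x0 by (simp add: fE_def pt2_def)
    then obtain E where E: "nonzero_mpoly 2 E" "\<forall>v. mpoly_val E v = fE v" using polyfun_nonzero[OF pf] by blast
    show ?thesis
    proof (intro exI[of _ E] conjI allI impI)
      fix x y z assume "mpoly_val E (pt2 x y) \<noteq> 0"
      then have "fE (pt2 x y) \<noteq> 0" using E by simp
      then have nz: "x \<noteq> 0" "PdG m a x \<noteq> 0" "PnG m a x \<noteq> 0" "bd41 (DG a b c m) x y \<noteq> 0" "FctG a b c m x y \<noteq> 0"
        by (auto simp: fE_def pt2_def)
      show "relB h1 h2 u x y z \<longleftrightarrow> z = bd41 (NG a b c m) x y / bd41 (DG a b c m) x y"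
        unfolding relBG by (rule relG_iff[OF a0 b0 c0 m0 m8 nz])
    qed (rule E(1))
  qed
  have E2: "\<exists>E. nonzero_mpoly 2 E \<and> (\<forall>x z. mpoly_val E (pt2 x z) \<noteq> 0 \<longrightarrow>
            (\<forall>y. relB h1 h2 u x y z \<longleftrightarrow> y = bd41 (NG a c b m) x z / bd41 (DG a c b m) x z))"
  proof -
    define fE where "fE = (\<lambda>v::nat\<Rightarrow>complex. v 0 * PdG m a (v 0) * PnG m a (v 0) * bd41 (DG a c b m) (v 0) (v 1) * FctG a c b m (v 0) (v 1))"
    have pf: "polyfun 2 fE" unfolding fE_def PdG_def PnG_def FctG_def bd41_def
      by (intro polyfun_mult polyfun_add polyfun_diff polyfun_power polyfun_sum polyfun_const polyfun_var finite_atMost) auto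
    have fin: "finite ({0} \<union> {x. PdG m a x = 0} \<union> {x. PnG m a x = 0} \<union> {x. bd41 (DG a c b m) x 0 = 0} \<union> {x. FctG a c b m x 0 = 0})"
      using Pd_roots[of m a] Pn_roots[of m a] D_roots[of "DG a c b m"] Fct_roots[OF c0 b0, of a m]
        m8 m0 a0 b0 c0 ac DG40[of a c b m] by simp
    obtain x0 where x0: "x0 \<notin> {0} \<union> {x. PdG m a x = 0} \<union> {x. PnG m a x = 0} \<union> {x. bd41 (DG a c b m) x 0 = 0} \<union> {x. FctG a c b m x 0 = 0}"
      using ex_new_if_finite[OF infinite_UNIV_char_0 fin] by blast
    have "fE (pt2 x0 0) \<noteq> 0" using x0 by (simp add: fE_def pt2_def)
    then obtain E where E: "nonzero_mpoly 2 E" "\<forall>v. mpoly_val E v = fE v" using polyfun_nonzero[OF pf] by blast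
    show ?thesis
    proof (intro exI[of _ E] conjI allI impI)
      fix x y z assume "mpoly_val E (pt2 x z) \<noteq> 0"
      then have "fE (pt2 x z) \<noteq> 0" using E by simp
      then have nz: "x \<noteq> 0" "PdG m a x \<noteq> 0" "PnG m a x \<noteq> 0" "bd41 (DG a c b m) x z \<noteq> 0" "FctG a c b m x z \<noteq> 0"
        by (auto simp: fE_def pt2_def)
      show "relB h1 h2 u x y z \<longleftrightarrow> y = bd41 (NG a c b m) x z / bd41 (DG a c b m) x z"
        unfolding relBG relG_sym[of a b c m x y z] by (rule relG_iff[OF a0 c0 b0 m0 m8' nz])
    qed (rule E(1))
  qed
  have fwdN: "fwd_props h1 h2 u (NG a b c m) (DG a b c m)"
    unfolding fwd_props_def Let_def q_def[symmetric]
  proof (intro conjI ballI)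
    fix i assume i: "i \<in> {1..8::nat}"
    then have "u i \<in> W" "u i \<noteq> 0" using W_def u0 by auto
    then show "bd41 (NG a b c m) (fbar h1 q (u i)) (gfun h2 (u i)) = 0"
      "bd41 (DG a b c m) (fbar h1 q (u i)) (gfun h2 (u i)) = 0"
      using curve_van[of "u i" a b c m] UGW by (auto simp: fbar_eq gfun_eq)
  next
    let ?B = "{t. \<not> (bd41 (DG a b c m) (fbar h1 q (h1 / (q * t))) (gfun h2 (h1 / (q * t))) \<noteq> 0 \<and>
             bd41 (NG a b c m) (fbar h1 q (h1 / (q * t))) (gfun h2 (h1 / (q * t))) /
             bd41 (DG a b c m) (fbar h1 q (h1 / (q * t))) (gfun h2 (h1 / (q * t))) = gbar h2 q t)}"
    have "?B \<subseteq> {0} \<union> (\<lambda>s. a/s) ` W"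
    proof
      fix t assume tB: "t \<in> ?B"
      show "t \<in> {0} \<union> (\<lambda>s. a/s) ` W"
      proof (rule ccontr)
        assume nt: "t \<notin> {0} \<union> (\<lambda>s. a/s) ` W"
        then have t0: "t \<noteq> 0" by auto
        define s where "s = a / t"
        have s0: "s \<noteq> 0" using t0 a0 s_def by simp
        have ts: "t = a / s" using s_def t0 a0 by simp
        have U0: "UG a b c m s \<noteq> 0"
        proof
          assume "UG a b c m s = 0"
          then have "s \<in> W" by (rule UGr)
          then show False using nt ts by auto
        qed
        have cm: "bd41 (DG a b c m) (s + a/s) (s + c/s) \<noteq> 0 \<and>
          bd41 (NG a b c m) (s + a/s) (s + c/s) / bd41 (DG a b c m) (s + a/s) (s + c/s) = a/s + b*s/a"
          by (rule curve_map[OF s0 a0 ac U0])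
        have g: "gbar h2 q t = a/s + b*s/a" unfolding gbar_eq ts using s0 a0 by simp
        have hs: "h1 / (q * t) = s" using sig s_def by simp
        have "\<not> (bd41 (DG a b c m) (s + a/s) (s + c/s) \<noteq> 0 \<and>
             bd41 (NG a b c m) (s + a/s) (s + c/s) / bd41 (DG a b c m) (s + a/s) (s + c/s) = a/s + b*s/a)"
          using tB unfolding mem_Collect_eq hs fbar_eq gfun_eq g .
        then show False using cm by blast
      qed
    qed
    moreover have "finite ({0} \<union> (\<lambda>s. a/s) ` W)" using fW by simp
    ultimately show "finite ?B" by (rule finite_subset)
  qed
  have invN: "inv_props h1 h2 u (NG a c b m) (DG a c b m)"
    unfolding inv_props_def Let_def q_def[symmetric]
  proof (intro conjI ballI)
    fix i assume i: "i \<in> {1..8::nat}"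
    then have "u i \<in> W" "u i \<noteq> 0" using W_def u0 by auto
    then show "bd41 (NG a c b m) (fbar h1 q (u i)) (gbar h2 q (u i)) = 0"
      "bd41 (DG a c b m) (fbar h1 q (u i)) (gbar h2 q (u i)) = 0"
      using curve_van[of "u i" a c b m] UGW by (auto simp: fbar_eq gbar_eq UG_swap)
  next
    let ?B = "{t. \<not> (bd41 (DG a c b m) (fbar h1 q t) (gbar h2 q t) \<noteq> 0 \<and>
                 bd41 (NG a c b m) (fbar h1 q t) (gbar h2 q t) / bd41 (DG a c b m) (fbar h1 q t) (gbar h2 q t)
                   = gfun h2 (h1/(q*t)))}"
    have "?B \<subseteq> {0} \<union> W"
    proof
      fix t assume tB: "t \<in> ?B"
      show "t \<in> {0} \<union> W"
      proof (rule ccontr)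
        assume nt: "t \<notin> {0} \<union> W"
        then have t0: "t \<noteq> 0" by auto
        have U0: "UG a c b m t \<noteq> 0"
        proof
          assume "UG a c b m t = 0"
          then have "t \<in> W" using UGr[of t] by (simp add: UG_swap)
          then show False using nt by simp
        qed
        have ab': "a \<noteq> b" by (rule ab)
        have cm: "bd41 (DG a c b m) (t + a/t) (t + b/t) \<noteq> 0 \<and>
          bd41 (NG a c b m) (t + a/t) (t + b/t) / bd41 (DG a c b m) (t + a/t) (t + b/t) = a/t + c*t/a"
          by (rule curve_map[OF t0 a0 ab' U0])
        have g: "gfun h2 (h1/(q*t)) = a/t + c*t/a" unfolding gfun_eq sig using t0 a0 by simp
        have "\<not> (bd41 (DG a c b m) (t + a/t) (t + b/t) \<noteq> 0 \<and>
          bd41 (NG a c b m) (t + a/t) (t + b/t) / bd41 (DG a c b m) (t + a/t) (t + b/t) = a/t + c*t/a)"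
          using tB unfolding mem_Collect_eq fbar_eq gbar_eq g .
        then show False using cm by blast
      qed
    qed
    moreover have "finite ({0} \<union> W)" using fW by simp
    ultimately show "finite ?B" by (rule finite_subset)
  qed
  have cW7: "card W \<ge> 7" using cW by simp
  have ratio: "n' * d = n * d'" if "d \<noteq> 0" "d' \<noteq> 0" "n / d = g" "n' / d' = g" for n d n' d' g :: complex
    using that by (simp add: field_simps)
  have uniq1: "bd41 N' x y * bd41 (DG a b c m) x y = bd41 (NG a b c m) x y * bd41 D' x y"
    if fp: "fwd_props h1 h2 u N' D'" for N' D' x y
  proof -
    let ?N = "NG a b c m" and ?D = "DG a b c m"
    define B where "B = (\<lambda>N D. {t. \<not> (bd41 D (fbar h1 q (h1 / (q * t))) (gfun h2 (h1 / (q * t))) \<noteq> 0 \<and>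
             bd41 N (fbar h1 q (h1 / (q * t))) (gfun h2 (h1 / (q * t))) /
             bd41 D (fbar h1 q (h1 / (q * t))) (gfun h2 (h1 / (q * t))) = gbar h2 q t)})"
    have A1: "(\<forall>i\<in>{1..8::nat}. bd41 N' (fbar h1 q (u i)) (gfun h2 (u i)) = 0 \<and> bd41 D' (fbar h1 q (u i)) (gfun h2 (u i)) = 0) \<and> finite (B N' D')"
      using fp unfolding fwd_props_def Let_def q_def[symmetric] B_def .
    have A2: "(\<forall>i\<in>{1..8::nat}. bd41 ?N (fbar h1 q (u i)) (gfun h2 (u i)) = 0 \<and> bd41 ?D (fbar h1 q (u i)) (gfun h2 (u i)) = 0) \<and> finite (B ?N ?D)"
      using fwdN unfolding fwd_props_def Let_def q_def[symmetric] B_def .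
    have van: "\<forall>w\<in>W. bd41 ?N (w + a/w) (w + c/w) = 0 \<and> bd41 ?D (w + a/w) (w + c/w) = 0 \<and>
                      bd41 N' (w + a/w) (w + c/w) = 0 \<and> bd41 D' (w + a/w) (w + c/w) = 0"
      using A1 A2 unfolding W_def fbar_eq gfun_eq by auto
    have sub: "{s. bd41 N' (s + a/s) (s + c/s) * bd41 ?D (s + a/s) (s + c/s) \<noteq>
                   bd41 ?N (s + a/s) (s + c/s) * bd41 D' (s + a/s) (s + c/s)}
          \<subseteq> {0} \<union> (\<lambda>t. a/t) ` (B ?N ?D \<union> B N' D')"
    proof
      fix s assume sS: "s \<in> {s. bd41 N' (s + a/s) (s + c/s) * bd41 ?D (s + a/s) (s + c/s) \<noteq>
                   bd41 ?N (s + a/s) (s + c/s) * bd41 D' (s + a/s) (s + c/s)}"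
      show "s \<in> {0} \<union> (\<lambda>t. a/t) ` (B ?N ?D \<union> B N' D')"
      proof (rule ccontr)
        assume ns: "s \<notin> {0} \<union> (\<lambda>t. a/t) ` (B ?N ?D \<union> B N' D')"
        then have s0: "s \<noteq> 0" by auto
        define t where "t = a / s"
        have st: "s = a / t" using s0 a0 t_def by simp
        have tB: "t \<notin> B ?N ?D \<union> B N' D'" using ns st by auto
        have hs: "h1 / (q * t) = s" using sig st by simp
        have tB1: "t \<notin> B ?N ?D" and tB2: "t \<notin> B N' D'" using tB by auto
        have c1: "bd41 ?D (s + a/s) (s + c/s) \<noteq> 0 \<and> bd41 ?N (s + a/s) (s + c/s) / bd41 ?D (s + a/s) (s + c/s) = gbar h2 q t"
          using tB1 unfolding B_def mem_Collect_eq hs fbar_eq gfun_eq by blast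
        have c2: "bd41 D' (s + a/s) (s + c/s) \<noteq> 0 \<and> bd41 N' (s + a/s) (s + c/s) / bd41 D' (s + a/s) (s + c/s) = gbar h2 q t"
          using tB2 unfolding B_def mem_Collect_eq hs fbar_eq gfun_eq by blast
        have "bd41 N' (s + a/s) (s + c/s) * bd41 ?D (s + a/s) (s + c/s) = bd41 ?N (s + a/s) (s + c/s) * bd41 D' (s + a/s) (s + c/s)"
          using c1 c2 ratio by blast
        then show False using sS by simp
      qed
    qed
    have fin: "finite {s. bd41 N' (s + a/s) (s + c/s) * bd41 ?D (s + a/s) (s + c/s) \<noteq>
                   bd41 ?N (s + a/s) (s + c/s) * bd41 D' (s + a/s) (s + c/s)}"
      by (rule finite_subset[OF sub]) (use A1 A2 in simp)
    show ?thesis by (rule uniq_core[OF a0 c0 ac fW cW7 Wz Winj van fin])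
  qed
  have uniq2: "bd41 N' x y * bd41 (DG a c b m) x y = bd41 (NG a c b m) x y * bd41 D' x y"
    if ip: "inv_props h1 h2 u N' D'" for N' D' x y
  proof -
    let ?N = "NG a c b m" and ?D = "DG a c b m"
    define B where "B = (\<lambda>N D. {t. \<not> (bd41 D (fbar h1 q t) (gbar h2 q t) \<noteq> 0 \<and>
                 bd41 N (fbar h1 q t) (gbar h2 q t) / bd41 D (fbar h1 q t) (gbar h2 q t)
                   = gfun h2 (h1/(q*t)))})"
    have A1: "(\<forall>i\<in>{1..8::nat}. bd41 N' (fbar h1 q (u i)) (gbar h2 q (u i)) = 0 \<and> bd41 D' (fbar h1 q (u i)) (gbar h2 q (u i)) = 0) \<and> finite (B N' D')"
      using ip unfolding inv_props_def Let_def q_def[symmetric] B_def .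
    have A2: "(\<forall>i\<in>{1..8::nat}. bd41 ?N (fbar h1 q (u i)) (gbar h2 q (u i)) = 0 \<and> bd41 ?D (fbar h1 q (u i)) (gbar h2 q (u i)) = 0) \<and> finite (B ?N ?D)"
      using invN unfolding inv_props_def Let_def q_def[symmetric] B_def .
    have van: "\<forall>w\<in>W. bd41 ?N (w + a/w) (w + b/w) = 0 \<and> bd41 ?D (w + a/w) (w + b/w) = 0 \<and>
                      bd41 N' (w + a/w) (w + b/w) = 0 \<and> bd41 D' (w + a/w) (w + b/w) = 0"
      using A1 A2 unfolding W_def fbar_eq gbar_eq by auto
    have sub: "{s. bd41 N' (s + a/s) (s + b/s) * bd41 ?D (s + a/s) (s + b/s) \<noteq>
                   bd41 ?N (s + a/s) (s + b/s) * bd41 D' (s + a/s) (s + b/s)}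
          \<subseteq> B ?N ?D \<union> B N' D'"
    proof
      fix s assume sS: "s \<in> {s. bd41 N' (s + a/s) (s + b/s) * bd41 ?D (s + a/s) (s + b/s) \<noteq>
                   bd41 ?N (s + a/s) (s + b/s) * bd41 D' (s + a/s) (s + b/s)}"
      show "s \<in> B ?N ?D \<union> B N' D'"
      proof (rule ccontr)
        assume tB: "s \<notin> B ?N ?D \<union> B N' D'"
        have tB1: "s \<notin> B ?N ?D" and tB2: "s \<notin> B N' D'" using tB by auto
        have c1: "bd41 ?D (s + a/s) (s + b/s) \<noteq> 0 \<and> bd41 ?N (s + a/s) (s + b/s) / bd41 ?D (s + a/s) (s + b/s) = gfun h2 (h1/(q*s))"
          using tB1 unfolding B_def mem_Collect_eq fbar_eq gbar_eq by blast
        have c2: "bd41 D' (s + a/s) (s + b/s) \<noteq> 0 \<and> bd41 N' (s + a/s) (s + b/s) / bd41 D' (s + a/s) (s + b/s) = gfun h2 (h1/(q*s))"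
          using tB2 unfolding B_def mem_Collect_eq fbar_eq gbar_eq by blast
        have "bd41 N' (s + a/s) (s + b/s) * bd41 ?D (s + a/s) (s + b/s) = bd41 ?N (s + a/s) (s + b/s) * bd41 D' (s + a/s) (s + b/s)"
          using c1 c2 ratio by blast
        then show False using sS by simp
      qed
    qed
    have fin: "finite {s. bd41 N' (s + a/s) (s + b/s) * bd41 ?D (s + a/s) (s + b/s) \<noteq>
                   bd41 ?N (s + a/s) (s + b/s) * bd41 D' (s + a/s) (s + b/s)}"
      by (rule finite_subset[OF sub]) (use A1 A2 in simp)
    show ?thesis by (rule uniq_core[OF a0 b0 ab fW cW7 Wz Winj van fin])
  qed
  show ?thesis
    apply (rule exI[of _ "NG a b c m"], rule exI[of _ "DG a b c m"], rule exI[of _ "NG a c b m"], rule exI[of _ "DG a c b m"])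
    using E1 E2 fwdN invN uniq1 uniq2 by blast
qed

theorem lemma3:
  shows "\<exists>Q. nonzero_mpoly 10 Q \<and>
    (\<forall>h1 h2 u. mpoly_val Q (param_vec h1 h2 u) \<noteq> 0 \<longrightarrow>
      (\<exists>N D N2 D2.
         \<comment> \<open>(B) defines gb = N/D as a function of (fb, g), generically\<close>
         (\<exists>E. nonzero_mpoly 2 E \<and> (\<forall>x y. mpoly_val E (pt2 x y) \<noteq> 0 \<longrightarrow>
            (\<forall>z. relB h1 h2 u x y z \<longleftrightarrow> z = bd41 N x y / bd41 D x y))) \<and>
         \<comment> \<open>and its inverse g = N2/D2 as a function of (fb, gb), generically\<close>
         (\<exists>E. nonzero_mpoly 2 E \<and> (\<forall>x z. mpoly_val E (pt2 x z) \<noteq> 0 \<longrightarrow>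
            (\<forall>y. relB h1 h2 u x y z \<longleftrightarrow> y = bd41 N2 x z / bd41 D2 x z))) \<and>
         \<comment> \<open>both satisfy (i) and (ii)\<close>
         fwd_props h1 h2 u N D \<and> inv_props h1 h2 u N2 D2 \<and>
         \<comment> \<open>and are uniquely characterized by (i) and (ii)\<close>
         (\<forall>N' D'. fwd_props h1 h2 u N' D' \<longrightarrow>
            (\<forall>x y. bd41 N' x y * bd41 D x y = bd41 N x y * bd41 D' x y)) \<and>
         (\<forall>N' D'. inv_props h1 h2 u N' D' \<longrightarrow>
            (\<forall>x y. bd41 N' x y * bd41 D2 x y = bd41 N2 x y * bd41 D' x y))))"
proof -
  obtain Q where Q: "nonzero_mpoly 10 Q" "\<forall>x. mpoly_val Q x = fQ x"
    using polyfun_nonzero[OF polyfun_fQ fQ_x0] by blast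
  show ?thesis
  proof (intro exI[of _ Q] conjI allI impI)
    show "nonzero_mpoly 10 Q" by (rule Q(1))
  next
    fix h1 h2 u assume "mpoly_val Q (param_vec h1 h2 u) \<noteq> 0"
    then have "fQ (param_vec h1 h2 u) \<noteq> 0" using Q(2) by simp
    then have "conds h1 h2 u" by (rule Q_conds)
    then show "\<exists>N D N2 D2.
         (\<exists>E. nonzero_mpoly 2 E \<and> (\<forall>x y. mpoly_val E (pt2 x y) \<noteq> 0 \<longrightarrow>
            (\<forall>z. relB h1 h2 u x y z \<longleftrightarrow> z = bd41 N x y / bd41 D x y))) \<and>
         (\<exists>E. nonzero_mpoly 2 E \<and> (\<forall>x z. mpoly_val E (pt2 x z) \<noteq> 0 \<longrightarrow>
            (\<forall>y. relB h1 h2 u x y z \<longleftrightarrow> y = bd41 N2 x z / bd41 D2 x z))) \<and>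
         fwd_props h1 h2 u N D \<and> inv_props h1 h2 u N2 D2 \<and>
         (\<forall>N' D'. fwd_props h1 h2 u N' D' \<longrightarrow>
            (\<forall>x y. bd41 N' x y * bd41 D x y = bd41 N x y * bd41 D' x y)) \<and>
         (\<forall>N' D'. inv_props h1 h2 u N' D' \<longrightarrow>
            (\<forall>x y. bd41 N' x y * bd41 D2 x y = bd41 N2 x y * bd41 D' x y))"
      by (rule main_generic)
  qed
qed

end
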